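(* Let $G$ be a finite group. If $OD(G)$ contains a cycle, then the girth of $OD(G)$ equals $3$.
   Context: For a finite group $G$, $o(x)$ denotes the order of $x\in G$. The order-divisor graph $OD(G)$ is the simple undirected graph with vertex set $G$, in which two distinct vertices $x,y$ are adjacent if and only if $o(x)\neq o(y)$ and either $o(x)\mid o(y)$ or $o(y)\mid o(x)$. The girth $g(\Gamma)$ of a graph $\Gamma$ is the length of a shortest cycle in $\Gamma$. *)

theory Defs
  imports "HOL-Algebra.Multiplicative_Group"
begin

definition od_adj :: "('a, 'b) monoid_scheme \<Rightarrow> 'a \<Rightarrow> 'a \<Rightarrow> bool" where
  "od_adj G x y \<longleftrightarrow> x \<in> carrier G \<and> y \<in> carrier G \<and> x \<noteq> y \<and>
     group.ord G x \<noteq> group.ord G y \<and>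
     (group.ord G x dvd group.ord G y \<or> group.ord G y dvd group.ord G x)"

definition is_cycle :: "'a set \<Rightarrow> ('a \<Rightarrow> 'a \<Rightarrow> bool) \<Rightarrow> 'a list \<Rightarrow> bool" where
  "is_cycle V E vs \<longleftrightarrow> length vs \<ge> 3 \<and> distinct vs \<and> set vs \<subseteq> V \<and>
     (\<forall>i < length vs. E (vs ! i) (vs ! ((i + 1) mod length vs)))"

definition has_cycle :: "'a set \<Rightarrow> ('a \<Rightarrow> 'a \<Rightarrow> bool) \<Rightarrow> bool" where
  "has_cycle V E \<longleftrightarrow> (\<exists>vs. is_cycle V E vs)"

text \<open>Girth: length of a shortest cycle (only meaningful when a cycle exists).\<close>
definition girth :: "'a set \<Rightarrow> ('a \<Rightarrow> 'a \<Rightarrow> bool) \<Rightarrow> nat" where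
  "girth V E = (LEAST n. \<exists>vs. is_cycle V E vs \<and> length vs = n)"

end

theory Submission
  imports Defs
begin

lemma edge_nonid:
  assumes "is_cycle V E vs" "e \<in> set vs"
  shows "\<exists>i < length vs. vs ! i \<noteq> e \<and> vs ! ((i + 1) mod length vs) \<noteq> e"
proof -
  have L: "length vs \<ge> 3" and D: "distinct vs" using assms(1) unfolding is_cycle_def by auto
  have NE: "vs \<noteq> []" using L by auto
  show ?thesis
  proof (cases "vs ! 0 = e")
    case True
    have "vs ! 1 \<noteq> vs ! 0" "vs ! 2 \<noteq> vs ! 0" using nth_eq_iff_index_eq[OF D, of 1 0] nth_eq_iff_index_eq[OF D, of 2 0] L NE by auto
    then have "vs ! 1 \<noteq> e" "vs ! 2 \<noteq> e" using True by auto
    moreover have "(1 + 1) mod length vs = 2" using L by auto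
    ultimately show ?thesis using L by (intro exI[of _ 1]) (simp add: numeral_2_eq_2)
  next
    case F: False
    show ?thesis
    proof (cases "vs ! 1 = e")
      case True
      have "vs ! 2 \<noteq> vs ! 1" using nth_eq_iff_index_eq[OF D, of 2 1] L NE by auto
      then have a: "vs ! 2 \<noteq> e" using True by auto
      have "(2 + 1) mod length vs \<noteq> 1" using L
        by (cases "length vs = 3") auto
      moreover have "(2 + 1) mod length vs < length vs" using L NE by auto
      ultimately have "vs ! ((2 + 1) mod length vs) \<noteq> e" using True nth_eq_iff_index_eq[OF D, of "(2 + 1) mod length vs" 1] L by auto
      then show ?thesis using a L by (intro exI[of _ 2]) auto
    next
      case False
      then show ?thesis using F L by (intro exI[of _ 0]) auto
    qed
  qed
qed

theorem mainTheorem3: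
  fixes G :: "('a, 'b) monoid_scheme"
  assumes "group G" and "finite (carrier G)"
    and "has_cycle (carrier G) (od_adj G)"
  shows "girth (carrier G) (od_adj G) = 3"
proof -
  interpret group G by fact
  obtain vs where c: "is_cycle (carrier G) (od_adj G) vs" using assms(3) has_cycle_def by auto
  have NE: "vs \<noteq> []" using c unfolding is_cycle_def by auto
  have L: "length vs \<ge> 3" and S: "set vs \<subseteq> carrier G"
    and A: "\<forall>i < length vs. od_adj G (vs ! i) (vs ! ((i + 1) mod length vs))"
    using c unfolding is_cycle_def by auto
  have "\<exists>x y. od_adj G x y \<and> x \<noteq> \<one>\<^bsub>G\<^esub> \<and> y \<noteq> \<one>\<^bsub>G\<^esub>"
  proof (cases "\<one>\<^bsub>G\<^esub> \<in> set vs")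
    case True
    then obtain i where "i < length vs" "vs ! i \<noteq> \<one>\<^bsub>G\<^esub>" "vs ! ((i + 1) mod length vs) \<noteq> \<one>\<^bsub>G\<^esub>"
      using edge_nonid[OF c] by blast
    then show ?thesis using A by blast
  next
    case False
    have "od_adj G (vs ! 0) (vs ! ((0 + 1) mod length vs))" using A[rule_format, of 0] L NE by auto
    moreover have "vs ! 0 \<in> set vs" "vs ! ((0 + 1) mod length vs) \<in> set vs" using L NE by auto
    ultimately show ?thesis using False by metis
  qed
  then obtain x y where xy: "od_adj G x y" "x \<noteq> \<one>\<^bsub>G\<^esub>" "y \<noteq> \<one>\<^bsub>G\<^esub>" by blast
  have xc: "x \<in> carrier G" and yc: "y \<in> carrier G" using xy unfolding od_adj_def by auto
  have ox: "ord x \<noteq> 1" using ord_eq_1 xc xy by auto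
  have oy: "ord y \<noteq> 1" using ord_eq_1 yc xy by auto
  have o1: "ord \<one>\<^bsub>G\<^esub> = 1" using ord_eq_1 by auto
  have ex: "od_adj G \<one>\<^bsub>G\<^esub> x" using xc xy ox o1 unfolding od_adj_def by auto
  have ey: "od_adj G y \<one>\<^bsub>G\<^esub>" using yc xy oy o1 unfolding od_adj_def by auto
  have tri: "is_cycle (carrier G) (od_adj G) [\<one>\<^bsub>G\<^esub>, x, y]"
    unfolding is_cycle_def using xy ex ey xc yc
    by (auto simp: less_Suc_eq nth_Cons' od_adj_def)
  show ?thesis unfolding girth_def
  proof (rule Least_equality)
    show "\<exists>vs. is_cycle (carrier G) (od_adj G) vs \<and> length vs = 3" using tri by (intro exI) auto
  next
    fix n assume "\<exists>vs. is_cycle (carrier G) (od_adj G) vs \<and> length vs = n"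
    then show "3 \<le> n" unfolding is_cycle_def by auto
  qed
qed

end
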